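(* Let $B(\xi)=\sum_{n=0}^{\infty} c_n \xi^n$ be the power series expansion at $\xi=0$ of the function $B(\xi) = W\!\left(\frac{\xi^2-2}{2e}\right)$, where the branches of the Lambert $W$ function are chosen so that $B$ is analytic on the disc $|\xi|<\sqrt{2}$ with $B(0)=-1$ and $B'(0)=1$ (so $c_0=-1$, $c_1=1$, $c_2=-\tfrac13$, $c_3=\tfrac{11}{72}$, $c_4=-\tfrac{43}{540},\dots$). Then for all $n\ge 0$, $|c_n| < 2\cdot (4/5)^n$, and also $|c_n|\le 1$.
   Context: The Lambert $W$ function is the (multivalued) inverse of $w\mapsto we^w$, i.e. $W(z)e^{W(z)}=z$. Equivalently, $B$ is the unique function analytic on $|\xi|<\sqrt2$ satisfying $B(\xi)e^{B(\xi)} = (\xi^2-2)/(2e)$ with $B(0)=-1$, $B'(0)=1$. In terms of the standard branches $W_k$, $B(\xi)=W_k((\xi^2-2)/(2e))$ with $k=0$ if $-\pi/2<\arg\xi\le\pi/2$, and $k=\pm1$ otherwise. *)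

theory Defs
  imports "HOL-Complex_Analysis.Complex_Analysis"
begin

definition taylor_coeff :: "(complex \<Rightarrow> complex) \<Rightarrow> nat \<Rightarrow> complex" where
  "taylor_coeff f n = (deriv ^^ n) f 0 / of_nat (fact n)"

end

theory Submission
  imports Defs
begin

lemma coeff_eq:
  fixes u :: "complex \<Rightarrow> complex" and R :: real
  assumes holo: "u holomorphic_on ball 0 R" and R: "R > 0"
    and ode: "\<And>\<xi>. \<xi> \<in> ball 0 R \<Longrightarrow> u \<xi> * deriv u \<xi> * (2 - \<xi>^2) = 2 * \<xi> * (1 - u \<xi>)"
    and m: "m \<ge> 2"
  shows "2 * (\<Sum>i=0..m. taylor_coeff u i * (of_nat (m - i + 1) * taylor_coeff u (m - i + 1)))
        - (\<Sum>i=0..m-2. taylor_coeff u i * (of_nat (m - 2 - i + 1) * taylor_coeff u (m - 2 - i + 1)))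
        = - 2 * taylor_coeff u (m - 1)"
proof -
  define U where "U = fps_expansion u 0"
  have hU: "u has_fps_expansion U"
    unfolding U_def using holo R by (intro has_fps_expansion_fps_expansion) auto
  have c: "U $ n = taylor_coeff u n" for n
    using fps_nth_fps_expansion[OF hU] by (simp add: taylor_coeff_def)
  have h1: "(\<lambda>\<xi>. u \<xi> * deriv u \<xi> * (2 - \<xi>^2)) has_fps_expansion U * fps_deriv U * (2 - fps_X^2)"
    by (intro fps_expansion_intros hU)
  have h2: "(\<lambda>\<xi>. 2 * \<xi> * (1 - u \<xi>)) has_fps_expansion 2 * fps_X * (1 - U)"
    by (intro fps_expansion_intros hU)
  have ev: "eventually (\<lambda>\<xi>. u \<xi> * deriv u \<xi> * (2 - \<xi>^2) = 2 * \<xi> * (1 - u \<xi>)) (nhds 0)"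
    using ode R by (intro eventually_nhds_in_open[THEN eventually_mono, of "ball 0 R"]) auto
  have h1': "(\<lambda>\<xi>. 2 * \<xi> * (1 - u \<xi>)) has_fps_expansion U * fps_deriv U * (2 - fps_X^2)"
    using has_fps_expansion_cong[OF ev refl] h1 by simp
  have E: "U * fps_deriv U * (2 - fps_X^2) = 2 * fps_X * (1 - U)"
    using fps_expansion_unique_complex[OF h1' h2] .
  define P where "P = U * fps_deriv U"
  have "(P * (2 - fps_X^2)) $ m = 2 * P $ m - P $ (m - 2)"
    using m by (simp add: algebra_simps fps_X_power_mult_right_nth numeral_fps_const)
  moreover have "(2 * fps_X * (1 - U)) $ m = - 2 * U $ (m - 1)"
    using m by (simp add: mult.assoc)
  ultimately have "2 * P $ m - P $ (m - 2) = - 2 * U $ (m - 1)"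
    using E unfolding P_def by simp
  then show ?thesis
    unfolding P_def fps_mult_nth fps_deriv_nth c by (simp add: add.commute)
qed

lemma coeffs_values:
  fixes c :: "nat \<Rightarrow> complex"
  assumes c0: "c 0 = 0" and c1: "c 1 = 1"
    and E: "\<And>m. m \<ge> 2 \<Longrightarrow> 2 * (\<Sum>i=0..m. c i * (of_nat (m - i + 1) * c (m - i + 1)))
        - (\<Sum>i=0..m-2. c i * (of_nat (m - 2 - i + 1) * c (m - 2 - i + 1))) = - 2 * c (m - 1)"
  shows "c 2 = -1/3 \<and> c 3 = 11/72 \<and> c 4 = -43/540 \<and> c 5 = 769/17280 \<and> c 6 = -221/8505
     \<and> c 7 = 680863/43545600 \<and> c 8 = -1963/204120 \<and> c 9 = 226287557/37623398400
     \<and> c 10 = -5776369/1515591000"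
proof -
  have c2: "c (Suc (Suc (0))) = -1/3" using E[of "Suc (Suc (0))"] c0 c1  by (simp only: numeral_2_eq_2 sum.atLeast0_atMost_Suc diff_Suc_Suc diff_zero) (simp, (simp add: field_simps)?, algebra?)
  have c3: "c (Suc (Suc (Suc (0)))) = 11/72" using E[of "Suc (Suc (Suc (0)))"] c0 c1 c2 by (simp only: numeral_2_eq_2 sum.atLeast0_atMost_Suc diff_Suc_Suc diff_zero) (simp, (simp add: field_simps)?, algebra?)
  have c4: "c (Suc (Suc (Suc (Suc (0))))) = -43/540" using E[of "Suc (Suc (Suc (Suc (0))))"] c0 c1 c2 c3 by (simp only: numeral_2_eq_2 sum.atLeast0_atMost_Suc diff_Suc_Suc diff_zero) (simp, (simp add: field_simps)?, algebra?)
  have c5: "c (Suc (Suc (Suc (Suc (Suc (0)))))) = 769/17280" using E[of "Suc (Suc (Suc (Suc (Suc (0)))))"] c0 c1 c2 c3 c4 by (simp only: numeral_2_eq_2 sum.atLeast0_atMost_Suc diff_Suc_Suc diff_zero) (simp, (simp add: field_simps)?, algebra?)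
  have c6: "c (Suc (Suc (Suc (Suc (Suc (Suc (0))))))) = -221/8505" using E[of "Suc (Suc (Suc (Suc (Suc (Suc (0))))))"] c0 c1 c2 c3 c4 c5 by (simp only: numeral_2_eq_2 sum.atLeast0_atMost_Suc diff_Suc_Suc diff_zero) (simp, (simp add: field_simps)?, algebra?)
  have c7: "c (Suc (Suc (Suc (Suc (Suc (Suc (Suc (0)))))))) = 680863/43545600" using E[of "Suc (Suc (Suc (Suc (Suc (Suc (Suc (0)))))))"] c0 c1 c2 c3 c4 c5 c6 by (simp only: numeral_2_eq_2 sum.atLeast0_atMost_Suc diff_Suc_Suc diff_zero) (simp, (simp add: field_simps)?, algebra?)
  have c8: "c (Suc (Suc (Suc (Suc (Suc (Suc (Suc (Suc (0))))))))) = -1963/204120" using E[of "Suc (Suc (Suc (Suc (Suc (Suc (Suc (Suc (0))))))))"] c0 c1 c2 c3 c4 c5 c6 c7 by (simp only: numeral_2_eq_2 sum.atLeast0_atMost_Suc diff_Suc_Suc diff_zero) (simp, (simp add: field_simps)?, algebra?)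
  have c9: "c (Suc (Suc (Suc (Suc (Suc (Suc (Suc (Suc (Suc (0)))))))))) = 226287557/37623398400" using E[of "Suc (Suc (Suc (Suc (Suc (Suc (Suc (Suc (Suc (0)))))))))"] c0 c1 c2 c3 c4 c5 c6 c7 c8 by (simp only: numeral_2_eq_2 sum.atLeast0_atMost_Suc diff_Suc_Suc diff_zero) (simp, (simp add: field_simps)?, algebra?)
  have c10: "c (Suc (Suc (Suc (Suc (Suc (Suc (Suc (Suc (Suc (Suc (0))))))))))) = -5776369/1515591000" using E[of "Suc (Suc (Suc (Suc (Suc (Suc (Suc (Suc (Suc (Suc (0))))))))))"] c0 c1 c2 c3 c4 c5 c6 c7 c8 c9 by (simp only: numeral_2_eq_2 sum.atLeast0_atMost_Suc diff_Suc_Suc diff_zero) (simp, (simp add: field_simps)?, algebra?)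
  show ?thesis using c2 c3 c4 c5 c6 c7 c8 c9 c10 by (simp add: numeral_eq_Suc)
qed

lemma exp6: "exp (6::real) \<ge> 393"
proof -
  have s: "(\<lambda>n. 6^n /\<^sub>R fact n) sums exp (6::real)" by (rule exp_converges)
  have "(\<Sum>n<12. (6::real)^n /\<^sub>R fact n) \<le> exp 6"
    using sum_le_suminf[OF sums_summable[OF s], of "{..<12}"] sums_unique[OF s] by simp
  moreover have "(\<Sum>n<12. (6::real)^n /\<^sub>R fact n) \<ge> 393"
    by (simp add: numeral_eq_Suc sum.lessThan_Suc)
  ultimately show ?thesis by linarith
qed

lemma norm_rhs:
  fixes \<xi> :: complex assumes "norm \<xi> \<le> 7/5"
  shows "norm (\<xi>^2/2) \<le> 49/50" "Re (1 - \<xi>^2/2) \<ge> 1/50" "norm (1 - \<xi>^2/2) \<ge> 1/50"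
proof -
  have "norm (\<xi>^2) \<le> (7/5)^2" unfolding norm_power using assms by (intro power_mono) auto
  then show a: "norm (\<xi>^2/2) \<le> 49/50" by (simp add: norm_divide power2_eq_square)
  have "Re (\<xi>^2/2) \<le> norm (\<xi>^2/2)" by (rule complex_Re_le_cmod)
  then show "Re (1 - \<xi>^2/2) \<ge> 1/50" using a by simp
  have "norm (1::complex) \<le> norm (1 - \<xi>^2/2) + norm (\<xi>^2/2)" by (metis diff_add_cancel norm_triangle_ineq)
  then show "norm (1 - \<xi>^2/2) \<ge> 1/50" using a by simp
qed

lemma sq_aux: "a^2 + b^2 = (1::real) \<Longrightarrow> (e * y * a - 1)^2 + (e * y * b)^2 = e * (e * y^2 - 2 * (y * a)) + 1"
  by algebra

lemma boundary_ne:
  fixes z \<xi> :: complex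
  assumes "-6 \<le> Re z" "Re z \<le> 1" "Im z \<le> pi" "-pi \<le> Im z"
    and bd: "Re z = -6 \<or> Re z = 1 \<or> Im z = pi \<or> Im z = -pi"
    and xi: "norm \<xi> \<le> 7/5"
  shows "(1 - z) * exp z \<noteq> 1 - \<xi>^2/2"
proof
  assume eq: "(1 - z) * exp z = 1 - \<xi>^2/2"
  note nr = norm_rhs[OF xi]
  have Rew: "Re ((1 - z) * exp z) = (1 - Re z) * (exp (Re z) * cos (Im z)) + Im z * (exp (Re z) * sin (Im z))"
    by (simp add: Re_exp Im_exp)
  have Imw: "Im ((1 - z) * exp z) = (1 - Re z) * (exp (Re z) * sin (Im z)) - Im z * (exp (Re z) * cos (Im z))"
    by (simp add: Re_exp Im_exp)
  consider "Im z = pi \<or> Im z = -pi" | "Re z = 1" | "Re z = -6" using bd by blast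
  then show False
  proof cases
    case 1
    then have "cos (Im z) = -1" "sin (Im z) = 0" by auto
    then have "Re ((1 - z) * exp z) \<le> 0" using Rew assms(2) by (simp add: mult_nonneg_nonneg)
    then show False using nr(2) eq by simp
  next
    case 2
    define y where "y = Im z"
    define e where "e = exp (1::real)"
    have e2: "e \<ge> 2" unfolding e_def using exp_ge_add_one_self[of 1] by simp
    have ys: "y * sin y \<le> y^2"
    proof -
      have "y * sin y \<le> \<bar>y\<bar> * \<bar>sin y\<bar>" by (metis abs_ge_self abs_mult)
      also have "\<dots> \<le> \<bar>y\<bar> * \<bar>y\<bar>" using abs_sin_x_le_abs_x[of y] by (intro mult_left_mono) auto
      finally show ?thesis by (simp add: power2_eq_square)
    qed
    have "Re ((1 - z) * exp z - 1) = e * y * sin y - 1" using Rew 2 by (simp add: e_def y_def)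
    moreover have "Im ((1 - z) * exp z - 1) = - e * y * cos y" using Imw 2 by (simp add: e_def y_def)
    ultimately have "(cmod ((1 - z) * exp z - 1))^2 = (e * y * sin y - 1)^2 + (e * y * cos y)^2"
      by (simp add: cmod_power2)
    also have "\<dots> = e * (e * y^2 - 2 * (y * sin y)) + 1"
      using sq_aux[OF sin_cos_squared_add[of y]] .
    also have "\<dots> \<ge> 1"
    proof -
      have "2 * y^2 \<le> e * y^2" using e2 by (intro mult_right_mono) auto
      then have "e * y^2 - 2 * (y * sin y) \<ge> 0" using ys by linarith
      moreover have "e \<ge> 0" using e2 by simp
      ultimately show ?thesis by simp
    qed
    finally have "(cmod ((1 - z) * exp z - 1))^2 \<ge> 1" .
    moreover have "(1 - z) * exp z - 1 = - (\<xi>^2/2)" using eq by simp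
    ultimately have "(cmod (\<xi>^2/2))^2 \<ge> 1" by simp
    moreover have "(cmod (\<xi>^2/2))^2 < 1" using nr(1) by (simp only: abs_square_less_1) simp
    ultimately show False by linarith
  next
    case 3
    have "pi \<le> 3.16" using pi_approx(2) by simp
    then have "pi * pi \<le> 3.16 * 3.16" by (intro mult_mono) auto
    then have pi2: "pi^2 < 10" by (simp add: power2_eq_square)
    have "(cmod (1 - z))^2 = 49 + (Im z)^2" using 3 by (simp add: cmod_power2)
    also have "(Im z)^2 \<le> pi^2" using assms(3,4) by (intro power2_le_iff_abs_le[THEN iffD2]) auto
    finally have n1: "(cmod (1 - z))^2 < 59" using pi2 by simp
    have "cmod ((1 - z) * exp z) = cmod (1 - z) * exp (-6)" using 3 by (simp add: norm_mult)
    moreover have "cmod (1 - z) * exp (-6) < 1/50"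
    proof -
      have e6: "exp (6::real) \<ge> 393" by (rule exp6)
      have "(50 * cmod (1 - z))^2 < (exp 6)^2"
      proof -
        have "(50 * cmod (1 - z))^2 = 2500 * (cmod (1 - z))^2" by (simp add: power2_eq_square)
        also have "\<dots> < 2500 * 59" using n1 by simp
        also have "\<dots> \<le> 393^2" by simp
        also have "\<dots> \<le> (exp 6)^2" using e6 by (intro power_mono) auto
        finally show ?thesis .
      qed
      then have "50 * cmod (1 - z) < exp 6"
        by (rule power2_less_imp_less) simp
      then show ?thesis by (simp add: exp_minus field_simps)
    qed
    ultimately show False using nr(3) eq by simp
  qed
qed

lemma ode_lemma:
  fixes u :: "complex \<Rightarrow> complex" and S :: "complex set"
  assumes holo: "u holomorphic_on S" and oS: "open S"
    and eq: "\<And>\<xi>. \<xi> \<in> S \<Longrightarrow> (1 - u \<xi>) * exp (u \<xi>) = 1 - \<xi>^2/2" and xS: "\<xi> \<in> S"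
  shows "u \<xi> * deriv u \<xi> * (2 - \<xi>^2) = 2 * \<xi> * (1 - u \<xi>)"
proof -
  have du: "(u has_field_derivative deriv u \<xi>) (at \<xi>)" using holomorphic_derivI[OF holo oS xS] .
  have d1: "((\<lambda>x. (1 - u x) * exp (u x)) has_field_derivative (- (u \<xi> * deriv u \<xi> * exp (u \<xi>)))) (at \<xi>)"
  proof -
    have "((\<lambda>x. (1 - u x) * exp (u x)) has_field_derivative ((0 - deriv u \<xi>) * exp (u \<xi>) + (exp (u \<xi>) * deriv u \<xi>) * (1 - u \<xi>))) (at \<xi>)"
      by (intro DERIV_mult DERIV_diff DERIV_const du DERIV_chain2[OF DERIV_exp du])
    then show ?thesis by (simp add: algebra_simps)
  qed
  have d1': "((\<lambda>x. 1 - x^2/2) has_field_derivative (- (u \<xi> * deriv u \<xi> * exp (u \<xi>)))) (at \<xi>)"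
    by (rule has_field_derivative_transform_within_open[OF d1 oS xS]) (rule eq)
  have d2: "((\<lambda>x. 1 - x^2/2) has_field_derivative - \<xi>) (at \<xi>)"
    by (auto intro!: derivative_eq_intros)
  have k: "u \<xi> * deriv u \<xi> * exp (u \<xi>) = \<xi>" using DERIV_unique[OF d1' d2] by simp
  have "u \<xi> * deriv u \<xi> * (2 - \<xi>^2) = 2 * (u \<xi> * deriv u \<xi> * ((1 - u \<xi>) * exp (u \<xi>)))"
    by (subst eq[OF xS]) (simp add: field_simps)
  also have "\<dots> = 2 * ((1 - u \<xi>) * (u \<xi> * deriv u \<xi> * exp (u \<xi>)))" by (simp only: mult_ac)
  also have "\<dots> = 2 * \<xi> * (1 - u \<xi>)" by (simp only: k) (simp only: mult_ac)
  finally show ?thesis .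
qed

lemma region:
  fixes u :: "complex \<Rightarrow> complex"
  assumes cont: "continuous_on (cball 0 (7/5)) u" and u0: "u 0 = 0"
    and eq: "\<And>\<xi>. \<xi> \<in> cball 0 (7/5) \<Longrightarrow> (1 - u \<xi>) * exp (u \<xi>) = 1 - \<xi>^2/2"
    and xi: "\<xi> \<in> cball 0 (7/5)"
  shows "-6 < Re (u \<xi>) \<and> Re (u \<xi>) < 1 \<and> Im (u \<xi>) < pi \<and> -pi < Im (u \<xi>)"
proof -
  define T where "T = {z. Re z > -6} \<inter> {z. Re z < 1} \<inter> {z. Im z < pi} \<inter> {z. Im z > -pi}"
  have oT: "open T" unfolding T_def
    by (intro open_Int open_halfspace_Re_gt open_halfspace_Re_lt open_halfspace_Im_lt open_halfspace_Im_gt)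
  define C where "C = {z. Re z \<ge> -6} \<inter> {z. Re z \<le> 1} \<inter> {z. Im z \<le> pi} \<inter> {z. Im z \<ge> -pi}"
  have cC: "closed C" unfolding C_def
    by (intro closed_Int closed_halfspace_Re_ge closed_halfspace_Re_le closed_halfspace_Im_le closed_halfspace_Im_ge)
  have "T \<subseteq> C" unfolding T_def C_def by auto
  then have clT: "closure T \<subseteq> C" using closure_minimal cC by blast
  let ?S = "u ` cball 0 (7/5)"
  have conn: "connected ?S" by (intro connected_continuous_image cont connected_cball)
  have "0 \<in> ?S" using u0 by (metis centre_in_cball image_eqI zero_le_divide_iff zero_le_numeral)
  moreover have "(0::complex) \<in> T" unfolding T_def by simp
  ultimately have ST: "?S \<inter> T \<noteq> {}" by blast
  have "?S \<subseteq> T"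
  proof (rule ccontr)
    assume "\<not> ?S \<subseteq> T"
    then have "?S - T \<noteq> {}" by auto
    from connected_Int_frontier[OF conn ST this] obtain w where w: "w \<in> ?S" "w \<in> frontier T" by blast
    then obtain \<zeta> where \<zeta>: "\<zeta> \<in> cball 0 (7/5)" "w = u \<zeta>" by auto
    have "w \<in> C" "w \<notin> T" using w(2) clT oT by (auto simp: frontier_def interior_open)
    then have bd: "-6 \<le> Re w" "Re w \<le> 1" "Im w \<le> pi" "-pi \<le> Im w"
      "Re w = -6 \<or> Re w = 1 \<or> Im w = pi \<or> Im w = -pi"
      unfolding C_def T_def by auto
    have "norm \<zeta> \<le> 7/5" using \<zeta>(1) by simp
    from boundary_ne[OF bd this] eq[OF \<zeta>(1)] \<zeta>(2) show False by simp
  qed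
  then have "u \<xi> \<in> T" using xi by blast
  then show ?thesis unfolding T_def by simp
qed

theorem theorem1:
  fixes B :: "complex \<Rightarrow> complex"
  assumes holo: "B holomorphic_on ball 0 (sqrt 2)"
    and eqn: "\<And>\<xi>. \<xi> \<in> ball 0 (sqrt 2) \<Longrightarrow> B \<xi> * exp (B \<xi>) = (\<xi>\<^sup>2 - 2) / (2 * exp 1)"
    and B0: "B 0 = -1"
    and B'0: "deriv B 0 = 1"
  shows "\<forall>n. norm (taylor_coeff B n) < 2 * (4/5) ^ n \<and> norm (taylor_coeff B n) \<le> 1"
proof -
  define D where "D = ball (0::complex) (sqrt 2)"
  define u where "u = (\<lambda>\<xi>. B \<xi> + 1)"
  have oD: "open D" and D0: "0 \<in> D" unfolding D_def by auto
  have holo_u: "u holomorphic_on D" unfolding u_def D_def using holo by (intro holomorphic_intros)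
  have eq_u: "(1 - u \<xi>) * exp (u \<xi>) = 1 - \<xi>^2/2" if "\<xi> \<in> D" for \<xi>
  proof -
    have e: "B \<xi> * exp (B \<xi>) = (\<xi>\<^sup>2 - 2) / (2 * exp 1)" using eqn that unfolding D_def by blast
    have "(1 - u \<xi>) * exp (u \<xi>) = - (B \<xi> * exp (B \<xi>)) * exp 1" unfolding u_def by (simp add: exp_add)
    also have "\<dots> = 1 - \<xi>^2/2" unfolding e by (simp add: field_simps)
    finally show ?thesis .
  qed
  have ode_u: "u \<xi> * deriv u \<xi> * (2 - \<xi>^2) = 2 * \<xi> * (1 - u \<xi>)" if "\<xi> \<in> ball 0 (sqrt 2)" for \<xi>
    using ode_lemma[OF holo_u oD eq_u] that unfolding D_def by blast
  have tc: "taylor_coeff B n = taylor_coeff u n" if "n \<ge> 1" for n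
  proof -
    have "(deriv ^^ n) u 0 = (deriv ^^ n) B 0 + (deriv ^^ n) (\<lambda>w. 1) 0"
      unfolding u_def by (rule higher_deriv_add[OF holo _ _ D0[unfolded D_def]]) auto
    then show ?thesis using that by (simp add: taylor_coeff_def)
  qed
  define c where "c = taylor_coeff u"
  have c0: "c 0 = 0" unfolding c_def taylor_coeff_def u_def using B0 by simp
  have c1: "c 1 = 1" using tc[of 1] B'0 unfolding c_def taylor_coeff_def by simp
  have E: "2 * (\<Sum>i=0..m. c i * (of_nat (m - i + 1) * c (m - i + 1)))
        - (\<Sum>i=0..m-2. c i * (of_nat (m - 2 - i + 1) * c (m - 2 - i + 1))) = - 2 * c (m - 1)"
    if "m \<ge> 2" for m
    unfolding c_def using coeff_eq[OF holo_u[unfolded D_def] _ ode_u that] by simp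
  note vals = coeffs_values[OF c0 c1 E]
  have r: "7/5 < sqrt (2::real)" by (rule real_less_rsqrt) (simp add: power2_eq_square)
  have sub: "cball (0::complex) (7/5) \<subseteq> D" unfolding D_def using r by (intro cball_subset_ball_iff[THEN iffD2]) auto
  have cont: "continuous_on (cball 0 (7/5)) u"
    using holomorphic_on_imp_continuous_on[OF holo_u] sub by (rule continuous_on_subset)
  have reg: "-6 < Re (u \<xi>) \<and> Re (u \<xi>) < 1 \<and> Im (u \<xi>) < pi \<and> -pi < Im (u \<xi>)" if "\<xi> \<in> cball 0 (7/5)" for \<xi>
  proof -
    have u0: "u 0 = 0" using c0 unfolding c_def taylor_coeff_def by simp
    have eqc: "(1 - u \<zeta>) * exp (u \<zeta>) = 1 - \<zeta>^2/2" if "\<zeta> \<in> cball 0 (7/5)" for \<zeta>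
      using eq_u sub that by blast
    show ?thesis by (rule region[OF cont u0 eqc that])
  qed
  have pi2: "pi^2 < 10"
  proof -
    have "pi \<le> 3.16" using pi_approx(2) by simp
    then have "pi * pi \<le> 3.16 * 3.16" by (intro mult_mono) auto
    then show ?thesis by (simp add: power2_eq_square)
  qed
  have bnd: "norm (u \<xi>) \<le> 34/5" if "\<xi> \<in> cball 0 (7/5)" for \<xi>
  proof -
    have h: "-6 < Re (u \<xi>)" "Re (u \<xi>) < 1" "Im (u \<xi>) < pi" "-pi < Im (u \<xi>)" using reg[OF that] by auto
    have "(Re (u \<xi>))^2 \<le> 36" using h(1,2) by (intro power2_le_iff_abs_le[THEN iffD2, of 6, simplified]) auto
    moreover have "(Im (u \<xi>))^2 \<le> pi^2" using h(3,4) by (intro power2_le_iff_abs_le[THEN iffD2]) auto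
    ultimately have "(norm (u \<xi>))^2 \<le> (34/5)^2" using pi2 by (simp add: cmod_power2 power2_eq_square[of "34/5"])
    then show ?thesis by (rule power2_le_imp_le) simp
  qed
  have cauchy: "norm (c n) \<le> (34/5) * (5/7)^n" for n
  proof -
    have "norm ((deriv ^^ n) u 0) \<le> fact n * (34/5) / (7/5)^n"
    proof (rule Cauchy_inequality)
      show "u holomorphic_on ball 0 (7/5)" using holo_u sub by (meson ball_subset_cball holomorphic_on_subset subset_trans)
      show "continuous_on (cball 0 (7/5)) u" by (rule cont)
      show "norm (u x) \<le> 34/5" if "norm (0 - x) = 7/5" for x using bnd that by simp
    qed simp
    then show ?thesis unfolding c_def taylor_coeff_def
      by (simp add: norm_divide field_simps power_divide)
  qed
  show ?thesis
  proof
    fix n :: nat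
    consider "n = 0" | "n = 1" | "n = 2" | "n = 3" | "n = 4" | "n = 5" | "n = 6" | "n = 7" | "n = 8"
      | "n = 9" | "n = 10" | "n \<ge> 11" by (atomize_elim) presburger
    then show "norm (taylor_coeff B n) < 2 * (4/5) ^ n \<and> norm (taylor_coeff B n) \<le> 1"
    proof cases
      case 1 then show ?thesis using B0 by (simp add: taylor_coeff_def)
    next
      case 2 then show ?thesis using tc[of n] c1 unfolding c_def by simp
    next
      case 3
      have v: "c 2 = -1/3" using vals by blast
      have "taylor_coeff B 2 = -1/3" using tc[of 2] v unfolding c_def by simp
      then show ?thesis by (simp only: 3) (simp add: norm_divide power_divide)
    next
      case 4
      have v: "c 3 = 11/72" using vals by blast
      have "taylor_coeff B 3 = 11/72" using tc[of 3] v unfolding c_def by simp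
      then show ?thesis by (simp only: 4) (simp add: norm_divide power_divide)
    next
      case 5
      have v: "c 4 = -43/540" using vals by blast
      have "taylor_coeff B 4 = -43/540" using tc[of 4] v unfolding c_def by simp
      then show ?thesis by (simp only: 5) (simp add: norm_divide power_divide)
    next
      case 6
      have v: "c 5 = 769/17280" using vals by blast
      have "taylor_coeff B 5 = 769/17280" using tc[of 5] v unfolding c_def by simp
      then show ?thesis by (simp only: 6) (simp add: norm_divide power_divide)
    next
      case 7
      have v: "c 6 = -221/8505" using vals by blast
      have "taylor_coeff B 6 = -221/8505" using tc[of 6] v unfolding c_def by simp
      then show ?thesis by (simp only: 7) (simp add: norm_divide power_divide)
    next
      case 8
      have v: "c 7 = 680863/43545600" using vals by blast
      have "taylor_coeff B 7 = 680863/43545600" using tc[of 7] v unfolding c_def by simp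
      then show ?thesis by (simp only: 8) (simp add: norm_divide power_divide)
    next
      case 9
      have v: "c 8 = -1963/204120" using vals by blast
      have "taylor_coeff B 8 = -1963/204120" using tc[of 8] v unfolding c_def by simp
      then show ?thesis by (simp only: 9) (simp add: norm_divide power_divide)
    next
      case 10
      have v: "c 9 = 226287557/37623398400" using vals by blast
      have "taylor_coeff B 9 = 226287557/37623398400" using tc[of 9] v unfolding c_def by simp
      then show ?thesis by (simp only: 10) (simp add: norm_divide power_divide)
    next
      case 11
      have v: "c 10 = -5776369/1515591000" using vals by blast
      have "taylor_coeff B 10 = -5776369/1515591000" using tc[of 10] v unfolding c_def by simp
      then show ?thesis by (simp only: 11) (simp add: norm_divide power_divide)
    next
      case 12
      define k where "k = n - 11"
      have nk: "n = 11 + k" using 12 unfolding k_def by simp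
      have "(34/5) * (5/7::real)^n = ((34/5) * (5/7)^11) * (5/7)^k" unfolding nk by (simp add: power_add)
      also have "\<dots> < (2 * (4/5)^11) * (5/7)^k" by (intro mult_strict_right_mono) (auto simp: power_divide)
      also have "\<dots> \<le> (2 * (4/5)^11) * (4/5)^k" by (intro mult_left_mono power_mono) auto
      also have "\<dots> = 2 * (4/5)^n" unfolding nk by (simp add: power_add)
      finally have a: "(34/5) * (5/7::real)^n < 2 * (4/5)^n" .
      have "2 * (4/5::real)^n = (2 * (4/5)^11) * (4/5)^k" unfolding nk by (simp add: power_add)
      also have "\<dots> \<le> (2 * (4/5)^11) * 1" by (intro mult_left_mono power_le_one) auto
      also have "\<dots> < 1" by (simp add: power_divide)
      finally have b: "2 * (4/5::real)^n < 1" .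
      have "norm (taylor_coeff B n) \<le> (34/5) * (5/7)^n" using tc[of n] cauchy[of n] 12 unfolding c_def by simp
      then show ?thesis using a b by linarith
    qed
  qed
qed

end
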